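(* Let $n\ge 3$ and let $f=f(x,y_0,\dots,y_n)$ be a smooth function on a connected open subset $U$ of $J^n(\mathbb R,\mathbb R)$ with $\frac{\partial^2 f}{\partial y_n^2}\neq 0$ everywhere on $U$. Let $D$ be the rank $2$ distribution on $U\times\mathbb R$ (coordinates $(x,y_0,\dots,y_n,z)$) spanned by $$X_1=\frac{\partial}{\partial x}+y_1\frac{\partial}{\partial y_0}+\dots+y_n\frac{\partial}{\partial y_{n-1}}+f\frac{\partial}{\partial z},\qquad X_2=\frac{\partial}{\partial y_n}.$$ Then the space of all infinitesimal symmetries of $D$ that lie in $D^3$ is a one-dimensional real vector space, spanned by $\frac{\partial}{\partial z}$.
   Context: $J^n(\mathbb R,\mathbb R)$ is the jet space with standard coordinates $(x,y_0,\dots,y_n)$. For a distribution $D$, the derived flag is $D^1=D$, $D^{i+1}=D^i+[D,D^i]$. An infinitesimal symmetry of $D$ is a vector field $Y$ with $[Y,\Gamma(D)]\subset\Gamma(D)$ (i.e. its local flow preserves $D$); $Y$ lies in $D^3$ if $Y(q)\in D^3(q)$ for all $q$. The distribution $D$ is said to be associated with the underdetermined ODE $z'=f(x,y,y',\dots,y^{(n)})$ (or with the Lagrangian $f\,dx$). *)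

theory Defs
  imports "HOL-Analysis.Analysis"
begin

definition pd :: "'m::finite \<Rightarrow> (real^'m \<Rightarrow> real) \<Rightarrow> real^'m \<Rightarrow> real" where
  "pd i g p = deriv (\<lambda>t. g (p + t *\<^sub>R axis i 1)) 0"

definition smooth_on :: "(real^'m::finite) set \<Rightarrow> (real^'m \<Rightarrow> real) \<Rightarrow> bool" where
  "smooth_on S g \<longleftrightarrow>
     (\<forall>is. continuous_on S (fold pd is g) \<and>
        (\<forall>i. \<forall>p\<in>S. (\<lambda>t. fold pd is g (p + t *\<^sub>R axis i 1)) differentiable (at 0)))"

text \<open>Vector fields on an open subset of real^'m are maps real^'m => real^'m (only values on the set matter).\<close>
definition vf_smooth :: "(real^'m::finite) set \<Rightarrow> (real^'m \<Rightarrow> real^'m) \<Rightarrow> bool" where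
  "vf_smooth S Y \<longleftrightarrow> (\<forall>j. smooth_on S (\<lambda>p. Y p $ j))"

definition vf_apply :: "(real^'m::finite \<Rightarrow> real^'m) \<Rightarrow> (real^'m \<Rightarrow> real) \<Rightarrow> real^'m \<Rightarrow> real" where
  "vf_apply Y g p = (\<Sum>i\<in>UNIV. Y p $ i * pd i g p)"

definition lie_bracket :: "(real^'m::finite \<Rightarrow> real^'m) \<Rightarrow> (real^'m \<Rightarrow> real^'m) \<Rightarrow> real^'m \<Rightarrow> real^'m" where
  "lie_bracket Y X p = (\<chi> j. vf_apply Y (\<lambda>q. X q $ j) p - vf_apply X (\<lambda>q. Y q $ j) p)"

definition smod :: "(real^'m::finite) set \<Rightarrow> (real^'m \<Rightarrow> real^'m) set \<Rightarrow> (real^'m \<Rightarrow> real^'m) set" where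
  "smod W S = {(\<lambda>p. \<Sum>k<N. c k p *\<^sub>R V k p) | (N::nat) c V.
                  \<forall>k<N. smooth_on W (c k) \<and> V k \<in> S}"

definition sections2 :: "(real^'m::finite) set \<Rightarrow> (real^'m \<Rightarrow> real^'m) \<Rightarrow> (real^'m \<Rightarrow> real^'m) \<Rightarrow> (real^'m \<Rightarrow> real^'m) set" where
  "sections2 W X1 X2 = smod W {X1, X2}"

fun derived :: "(real^'m::finite) set \<Rightarrow> (real^'m \<Rightarrow> real^'m) set \<Rightarrow> nat \<Rightarrow> (real^'m \<Rightarrow> real^'m) set" where
  "derived W G 0 = G"
| "derived W G (Suc 0) = G"
| "derived W G (Suc (Suc i)) =
     smod W (derived W G (Suc i) \<union> {lie_bracket A B | A B. A \<in> G \<and> B \<in> derived W G (Suc i)})"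

definition sec_in :: "(real^'m::finite) set \<Rightarrow> (real^'m \<Rightarrow> real^'m) set \<Rightarrow> (real^'m \<Rightarrow> real^'m) \<Rightarrow> bool" where
  "sec_in W G V \<longleftrightarrow> (\<exists>V'\<in>G. \<forall>p\<in>W. V p = V' p)"

definition inf_symmetry :: "(real^'m::finite) set \<Rightarrow> (real^'m \<Rightarrow> real^'m) set \<Rightarrow> (real^'m \<Rightarrow> real^'m) \<Rightarrow> bool" where
  "inf_symmetry W G Y \<longleftrightarrow> vf_smooth W Y \<and> (\<forall>V\<in>G. sec_in W G (lie_bracket Y V))"

definition lies_in :: "(real^'m::finite) set \<Rightarrow> (real^'m \<Rightarrow> real^'m) set \<Rightarrow> (real^'m \<Rightarrow> real^'m) \<Rightarrow> bool" where
  "lies_in W G Y \<longleftrightarrow> (\<forall>q\<in>W. Y q \<in> {V q | V. V \<in> G})"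

text \<open>Jet space J^n(R,R) = real^'j with an enumeration e of coordinates:
  e 0 = x, e (k+1) = y_k (k = 0..n). The space J^n x R is real^('j option), with
  Some k the jet coordinates and None the z coordinate.\<close>
definition jproj :: "real^('j::finite option) \<Rightarrow> real^'j" where
  "jproj p = (\<chi> k. p $ Some k)"

definition X1_field :: "nat \<Rightarrow> (nat \<Rightarrow> 'j::finite) \<Rightarrow> (real^'j \<Rightarrow> real) \<Rightarrow> real^('j option) \<Rightarrow> real^('j option)" where
  "X1_field n e f p = (\<chi> c. case c of
       None \<Rightarrow> f (jproj p)
     | Some k \<Rightarrow> (if k = e 0 then 1
                  else if (\<exists>i<n. k = e (i + 1)) then p $ Some (e (inv_into {..<n+2} e k + 1))
                  else 0))"

definition X2_field :: "nat \<Rightarrow> (nat \<Rightarrow> 'j::finite) \<Rightarrow> real^('j option) \<Rightarrow> real^('j option)" where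
  "X2_field n e p = axis (Some (e (n + 1))) 1"

end

theory Submission
  imports Defs
begin


abbreviation "pdv i g p \<equiv> (\<lambda>t. g (p + t *\<^sub>R axis i (1::real)))"

lemma ev_in_open:
  fixes p :: "real^'m::finite"
  assumes "open S" "p \<in> S"
  shows "eventually (\<lambda>t. p + t *\<^sub>R v \<in> S) (nhds (0::real))"
proof -
  have "((\<lambda>t. p + t *\<^sub>R v) \<longlongrightarrow> p + 0 *\<^sub>R v) (nhds (0::real))"
    by (intro tendsto_intros filterlim_ident)
  then have "((\<lambda>t. p + t *\<^sub>R v) \<longlongrightarrow> p) (nhds (0::real))" by simp
  from topological_tendstoD[OF this assms] show ?thesis .
qed

lemma pd_local:
  assumes "open S" "p \<in> S" "\<forall>q\<in>S. g q = h q"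
  shows "pd i g p = pd i h p"
  unfolding pd_def
  apply (rule deriv_cong_ev[OF _ refl])
  using ev_in_open[OF assms(1,2), of "axis i 1"] assms(3)
  by (auto elim: eventually_mono)

lemma diff_local:
  fixes p :: "real^'m::finite" and g h :: "real^'m \<Rightarrow> real"
  assumes "open S" "p \<in> S" "\<forall>q\<in>S. g q = h q"
    and "(\<lambda>t. g (p + t *\<^sub>R axis i 1)) differentiable (at 0)"
  shows "(\<lambda>t. h (p + t *\<^sub>R axis i 1)) differentiable (at (0::real))"
proof -
  have ev: "eventually (\<lambda>t. g (p + t *\<^sub>R axis i 1) = h (p + t *\<^sub>R axis i 1)) (nhds (0::real))"
    using ev_in_open[OF assms(1,2), of "axis i 1"] assms(3)
    by (auto elim: eventually_mono)
  from assms(4) obtain D where "DERIV (\<lambda>t. g (p + t *\<^sub>R axis i 1)) 0 :> D"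
    by (metis DERIV_deriv_iff_real_differentiable)
  then have "DERIV (\<lambda>t. h (p + t *\<^sub>R axis i 1)) 0 :> D"
    using DERIV_cong_ev[OF refl ev refl] by simp
  then show ?thesis using real_differentiable_def by blast
qed

lemma pd_DERIV:
  assumes "(\<lambda>t. g (p + t *\<^sub>R axis i 1)) differentiable (at (0::real))"
  shows "DERIV (\<lambda>t. g (p + t *\<^sub>R axis i 1)) 0 :> pd i g p"
  using assms unfolding pd_def by (simp add: DERIV_deriv_iff_real_differentiable)

lemma pd_add:
  assumes "(\<lambda>t. g (p + t *\<^sub>R axis i 1)) differentiable (at (0::real))"
    "(\<lambda>t. h (p + t *\<^sub>R axis i 1)) differentiable (at (0::real))"
  shows "pd i (\<lambda>q. g q + h q) p = pd i g p + pd i h p"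
    and "(\<lambda>t. g (p + t *\<^sub>R axis i 1) + h (p + t *\<^sub>R axis i 1)) differentiable (at (0::real))"
proof -
  have "DERIV (\<lambda>t. g (p + t *\<^sub>R axis i 1) + h (p + t *\<^sub>R axis i 1)) 0 :> pd i g p + pd i h p"
    by (intro DERIV_add pd_DERIV assms)
  then show "pd i (\<lambda>q. g q + h q) p = pd i g p + pd i h p"
    "(\<lambda>t. g (p + t *\<^sub>R axis i 1) + h (p + t *\<^sub>R axis i 1)) differentiable (at (0::real))"
    unfolding pd_def using DERIV_imp_deriv real_differentiable_def by auto
qed

lemma pd_mult:
  assumes "(\<lambda>t. g (p + t *\<^sub>R axis i 1)) differentiable (at (0::real))"
    "(\<lambda>t. h (p + t *\<^sub>R axis i 1)) differentiable (at (0::real))"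
  shows "pd i (\<lambda>q. g q * h q) p = pd i g p * h p + g p * pd i h p"
    and "(\<lambda>t. g (p + t *\<^sub>R axis i 1) * h (p + t *\<^sub>R axis i 1)) differentiable (at (0::real))"
proof -
  have "DERIV (\<lambda>t. g (p + t *\<^sub>R axis i 1) * h (p + t *\<^sub>R axis i 1)) 0 :> pd i g p * h (p + 0 *\<^sub>R axis i 1) + g (p + 0 *\<^sub>R axis i 1) * pd i h p"
    using DERIV_mult[OF pd_DERIV[OF assms(1)] pd_DERIV[OF assms(2)]] by (simp add: mult.commute)
  then show "pd i (\<lambda>q. g q * h q) p = pd i g p * h p + g p * pd i h p"
    "(\<lambda>t. g (p + t *\<^sub>R axis i 1) * h (p + t *\<^sub>R axis i 1)) differentiable (at (0::real))"
    unfolding pd_def using DERIV_imp_deriv real_differentiable_def by auto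
qed

lemma pd_const: "pd i (\<lambda>q. c) p = 0"
  unfolding pd_def by simp

lemma pd_coord: "pd i (\<lambda>q. q $ j) p = (if i = j then 1 else 0)"
proof -
  have "DERIV (\<lambda>t. (p + t *\<^sub>R axis i 1) $ j) 0 :> (if i = j then 1 else 0)"
  proof (cases "i = j")
    case True
    then show ?thesis by (auto simp: axis_def intro!: derivative_eq_intros)
  next
    case False
    then show ?thesis by (auto simp: axis_def intro!: derivative_eq_intros)
  qed
  then show ?thesis unfolding pd_def by (rule DERIV_imp_deriv)
qed

lemma diff_coord: "(\<lambda>t. (p + t *\<^sub>R axis i 1) $ j) differentiable (at (0::real))"
  by (auto simp: axis_def intro!: derivative_intros)

lemma diff_const: "(\<lambda>t. c) differentiable (at (0::real))"
  by simp

definition pdiff :: "(real^'m::finite) set \<Rightarrow> (real^'m \<Rightarrow> real) \<Rightarrow> bool" where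
  "pdiff S g \<longleftrightarrow> (\<forall>i. \<forall>p\<in>S. (\<lambda>t. g (p + t *\<^sub>R axis i 1)) differentiable (at (0::real)))"

lemma smooth_on_alt: "smooth_on S g \<longleftrightarrow> (\<forall>is. continuous_on S (fold pd is g) \<and> pdiff S (fold pd is g))"
  unfolding smooth_on_def pdiff_def by blast

lemma smooth_pd: assumes "smooth_on S g" shows "smooth_on S (pd i g)"
proof -
  have "\<And>is. continuous_on S (fold pd (i#is) g) \<and> (\<forall>j. \<forall>p\<in>S. (\<lambda>t. fold pd (i#is) g (p + t *\<^sub>R axis j 1)) differentiable (at 0))"
    using assms unfolding smooth_on_def by blast
  then show ?thesis unfolding smooth_on_def by simp
qed

lemma smooth_pdiff: "smooth_on S g \<Longrightarrow> pdiff S g"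
  unfolding smooth_on_alt by (metis fold_Nil id_apply)

lemma smooth_diff: "smooth_on S g \<Longrightarrow> p \<in> S \<Longrightarrow> (\<lambda>t. g (p + t *\<^sub>R axis i 1)) differentiable (at (0::real))"
  using smooth_pdiff pdiff_def by blast

lemma smooth_cont: "smooth_on S g \<Longrightarrow> continuous_on S g"
  unfolding smooth_on_alt by (metis fold_Nil id_apply)

lemma fold_local:
  assumes "open S" 
  shows "\<forall>q\<in>S. g q = h q \<Longrightarrow> \<forall>q\<in>S. fold pd is g q = fold pd is h q"
proof (induction "is" arbitrary: g h)
  case Nil
  then show ?case by simp
next
  case (Cons i "is")
  have "\<forall>q\<in>S. pd i g q = pd i h q" using pd_local[OF assms] Cons.prems by blast
  from Cons.IH[OF this] show ?case by simp
qed

lemma pdiff_local: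
  assumes "open S" "\<forall>q\<in>S. g q = h q" "pdiff S g"
  shows "pdiff S h"
  using assms diff_local unfolding pdiff_def by blast

lemma smooth_local:
  assumes "open S" "\<forall>q\<in>S. g q = h q" "smooth_on S g"
  shows "smooth_on S h"
  unfolding smooth_on_alt
proof
  fix "is"
  have e: "\<forall>q\<in>S. fold pd is g q = fold pd is h q" using fold_local[OF assms(1,2)] .
  have "continuous_on S (fold pd is g)" "pdiff S (fold pd is g)" using assms(3) smooth_on_alt by blast+
  then show "continuous_on S (fold pd is h) \<and> pdiff S (fold pd is h)"
    using e continuous_on_cong[of S S "fold pd is g" "fold pd is h"] pdiff_local[OF assms(1) e] by auto
qed

inductive_set alg :: "(real^'m::finite \<Rightarrow> real) set \<Rightarrow> (real^'m \<Rightarrow> real) set" for B where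
  base: "g \<in> B \<Longrightarrow> g \<in> alg B"
| add: "g \<in> alg B \<Longrightarrow> h \<in> alg B \<Longrightarrow> (\<lambda>q. g q + h q) \<in> alg B"
| mul: "g \<in> alg B \<Longrightarrow> h \<in> alg B \<Longrightarrow> (\<lambda>q. g q * h q) \<in> alg B"

lemma alg_props:
  assumes S: "open S" and B1: "\<forall>g\<in>B. continuous_on S g \<and> pdiff S g" and B2: "\<forall>g\<in>B. \<forall>i. pd i g \<in> B"
  shows "F \<in> alg B \<Longrightarrow> continuous_on S F \<and> pdiff S F \<and> (\<forall>i. \<exists>F'\<in>alg B. \<forall>q\<in>S. pd i F q = F' q)"
proof (induction F rule: alg.induct)
  case (base g)
  then show ?case using B1 B2 alg.base by blast
next
  case (add g h)
  show ?case
  proof (intro conjI allI)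
    show "continuous_on S (\<lambda>q. g q + h q)" using add by (intro continuous_intros) auto
    show "pdiff S (\<lambda>q. g q + h q)" using add pd_add(2) unfolding pdiff_def by blast
    fix i
    obtain g' h' where g': "g' \<in> alg B" "\<forall>q\<in>S. pd i g q = g' q" and h': "h' \<in> alg B" "\<forall>q\<in>S. pd i h q = h' q"
      using add by blast
    have "\<forall>q\<in>S. pd i (\<lambda>q. g q + h q) q = g' q + h' q"
    proof
      fix q assume q: "q \<in> S"
      have d: "pdiff S g" "pdiff S h" using add by blast+
      have "pd i (\<lambda>q. g q + h q) q = pd i g q + pd i h q"
        by (rule pd_add(1)) (use d q in \<open>auto simp: pdiff_def\<close>)
      then show "pd i (\<lambda>q. g q + h q) q = g' q + h' q" using g' h' q by simp
    qed
    then show "\<exists>F'\<in>alg B. \<forall>q\<in>S. pd i (\<lambda>q. g q + h q) q = F' q"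
      by (intro bexI[OF _ alg.add[OF g'(1) h'(1)]])
  qed
next
  case (mul g h)
  show ?case
  proof (intro conjI allI)
    show "continuous_on S (\<lambda>q. g q * h q)" using mul by (intro continuous_intros) auto
    show "pdiff S (\<lambda>q. g q * h q)" using mul pd_mult(2) unfolding pdiff_def by blast
    fix i
    obtain g' h' where g': "g' \<in> alg B" "\<forall>q\<in>S. pd i g q = g' q" and h': "h' \<in> alg B" "\<forall>q\<in>S. pd i h q = h' q"
      using mul by blast
    have "\<forall>q\<in>S. pd i (\<lambda>q. g q * h q) q = g' q * h q + g q * h' q"
    proof
      fix q assume q: "q \<in> S"
      have d: "pdiff S g" "pdiff S h" using mul by blast+
      have "pd i (\<lambda>q. g q * h q) q = pd i g q * h q + g q * pd i h q"
        by (rule pd_mult(1)) (use d q in \<open>auto simp: pdiff_def\<close>)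
      then show "pd i (\<lambda>q. g q * h q) q = g' q * h q + g q * h' q" using g' h' q by simp
    qed
    then show "\<exists>F'\<in>alg B. \<forall>q\<in>S. pd i (\<lambda>q. g q * h q) q = F' q"
      by (intro bexI[OF _ alg.add[OF alg.mul[OF g'(1) mul(2)] alg.mul[OF mul(1) h'(1)]]])
  qed
qed

lemma alg_smooth:
  assumes S: "open S" and B1: "\<forall>g\<in>B. continuous_on S g \<and> pdiff S g" and B2: "\<forall>g\<in>B. \<forall>i. pd i g \<in> B"
    and F: "F \<in> alg B"
  shows "smooth_on S F"
proof -
  have "\<forall>F. F \<in> alg B \<longrightarrow> (\<exists>F'\<in>alg B. \<forall>q\<in>S. fold pd is F q = F' q)" for "is"
  proof (induction "is")
    case Nil
    then show ?case by auto
  next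
    case (Cons i "is")
    show ?case
    proof (intro allI impI)
      fix F assume "F \<in> alg B"
      then obtain F' where F': "F' \<in> alg B" "\<forall>q\<in>S. pd i F q = F' q"
        using alg_props[OF S B1 B2] by blast
      obtain F'' where F'': "F'' \<in> alg B" "\<forall>q\<in>S. fold pd is F' q = F'' q"
        using Cons.IH F'(1) by blast
      have "\<forall>q\<in>S. fold pd is (pd i F) q = fold pd is F' q" using fold_local[OF S F'(2)] .
      then show "\<exists>F'\<in>alg B. \<forall>q\<in>S. fold pd (i # is) F q = F' q" using F'' by auto
    qed
  qed
  note X = this
  show ?thesis
    unfolding smooth_on_alt
  proof
    fix "is"
    obtain F' where F': "F' \<in> alg B" "\<forall>q\<in>S. fold pd is F q = F' q" using X F by blast
    have "continuous_on S F'" "pdiff S F'" using alg_props[OF S B1 B2 F'(1)] by blast+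
    then show "continuous_on S (fold pd is F) \<and> pdiff S (fold pd is F)"
      using F'(2) continuous_on_cong[of S S "fold pd is F" F'] pdiff_local[OF S, of F' "fold pd is F"] by auto
  qed
qed

lemma smooth_alg:
  assumes S: "open S" and sm: "\<forall>g\<in>Bs. smooth_on S g"
    and F: "F \<in> alg {fold pd is g | is g. g \<in> Bs}"
  shows "smooth_on S F"
proof (rule alg_smooth[OF S _ _ F])
  show "\<forall>g\<in>{fold pd is g |is g. g \<in> Bs}. continuous_on S g \<and> pdiff S g"
    using sm smooth_on_alt by blast
  show "\<forall>g\<in>{fold pd is g |is g. g \<in> Bs}. \<forall>i. pd i g \<in> {fold pd is g |is g. g \<in> Bs}"
  proof (intro ballI allI)
    fix g i assume "g \<in> {fold pd is g |is g. g \<in> Bs}"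
    then obtain "is" g0 where "g = fold pd is g0" "g0 \<in> Bs" by blast
    then have "pd i g = fold pd (is @ [i]) g0" by simp
    then show "pd i g \<in> {fold pd is g |is g. g \<in> Bs}" using \<open>g0 \<in> Bs\<close> by blast
  qed
qed

lemma smooth_add: assumes "open S" "smooth_on S g" "smooth_on S h" shows "smooth_on S (\<lambda>q. g q + h q)"
proof (rule smooth_alg[where Bs="{g,h}"])
  have "g \<in> {fold pd is g0 | is g0. g0 \<in> {g,h}}" by (rule CollectI, rule exI[of _ "[]"], rule exI[of _ g]) simp
  moreover have "h \<in> {fold pd is g0 | is g0. g0 \<in> {g,h}}" by (rule CollectI, rule exI[of _ "[]"], rule exI[of _ h]) simp
  ultimately show "(\<lambda>q. g q + h q) \<in> alg {fold pd is g0 | is g0. g0 \<in> {g,h}}" by (intro alg.add alg.base)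
qed (use assms in auto)

lemma smooth_mult: assumes "open S" "smooth_on S g" "smooth_on S h" shows "smooth_on S (\<lambda>q. g q * h q)"
proof (rule smooth_alg[where Bs="{g,h}"])
  have "g \<in> {fold pd is g0 | is g0. g0 \<in> {g,h}}" by (rule CollectI, rule exI[of _ "[]"], rule exI[of _ g]) simp
  moreover have "h \<in> {fold pd is g0 | is g0. g0 \<in> {g,h}}" by (rule CollectI, rule exI[of _ "[]"], rule exI[of _ h]) simp
  ultimately show "(\<lambda>q. g q * h q) \<in> alg {fold pd is g0 | is g0. g0 \<in> {g,h}}" by (intro alg.mul alg.base)
qed (use assms in auto)

lemma fold_pd_const: "fold pd is (\<lambda>q. c) = (\<lambda>q. if is = [] then c else 0)"
proof (induction "is" arbitrary: c)
  case Nil then show ?case by simp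
next
  case (Cons i "is") then show ?case by (simp add: pd_const[abs_def])
qed

lemma smooth_const: "smooth_on S (\<lambda>q. c)"
  unfolding smooth_on_def fold_pd_const by auto

lemma smooth_coord: "smooth_on S (\<lambda>q. q $ j)"
  unfolding smooth_on_def
proof (intro allI conjI ballI)
  fix "is" i p
  show "continuous_on S (fold pd is (\<lambda>q. q $ j))"
    by (cases "is") (auto simp: pd_coord[abs_def] fold_pd_const intro!: continuous_intros)
  show "(\<lambda>t. fold pd is (\<lambda>q. q $ j) (p + t *\<^sub>R axis i 1)) differentiable at 0"
    by (cases "is") (auto simp: pd_coord[abs_def] fold_pd_const diff_coord)
qed

lemma smooth_sum: "open S \<Longrightarrow> (\<And>k. k < (N::nat) \<Longrightarrow> smooth_on S (c k)) \<Longrightarrow> smooth_on S (\<lambda>q. \<Sum>k<N. c k q)"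
proof (induction N)
  case 0 then show ?case using smooth_const by simp
next
  case (Suc N)
  then show ?case by (simp add: smooth_add)
qed

lemma smooth_sumU:
  fixes A :: "'a set"
  assumes "open S" "\<And>k. smooth_on S (c k)" shows "smooth_on S (\<lambda>q. \<Sum>k\<in>A. c k q)"
  using assms
proof (induct A rule: infinite_finite_induct)
  case (infinite A) then show ?case using smooth_const by simp
next
  case empty then show ?case using smooth_const by simp
next
  case (insert x F)
  then show ?case by (simp add: smooth_add)
qed

lemma smooth_minus: assumes "open S" "smooth_on S g" "smooth_on S h" shows "smooth_on S (\<lambda>q. g q - h q)"
proof -
  have "smooth_on S (\<lambda>q. g q + (-1) * h q)"
    by (intro smooth_add smooth_mult assms smooth_const)
  then show ?thesis by simp
qed

lemma vf_apply_local:
  assumes "open S" "p \<in> S" "\<forall>q\<in>S. g q = h q"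
  shows "vf_apply Y g p = vf_apply Y h p"
  unfolding vf_apply_def using pd_local[OF assms] by simp

lemma vf_smooth_bracket:
  assumes S: "open S" and A: "vf_smooth S A" and B: "vf_smooth S B"
  shows "vf_smooth S (lie_bracket A B)"
  unfolding vf_smooth_def lie_bracket_def vf_apply_def
proof
  fix j
  have sA: "\<And>i. smooth_on S (\<lambda>p. A p $ i)" and sB: "\<And>i. smooth_on S (\<lambda>p. B p $ i)"
    using A B vf_smooth_def by blast+
  show "smooth_on S (\<lambda>p. (\<chi> j. (\<Sum>i\<in>UNIV. A p $ i * pd i (\<lambda>q. B q $ j) p) - (\<Sum>i\<in>UNIV. B p $ i * pd i (\<lambda>q. A q $ j) p)) $ j)"
    by (simp, intro smooth_minus smooth_sumU smooth_mult smooth_pd sA sB S)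
qed

lemma smod_E:
  assumes "V \<in> smod S G0"
  obtains N c Vs where "V = (\<lambda>p. \<Sum>k<(N::nat). c k p *\<^sub>R Vs k p)" "\<forall>k<N. smooth_on S (c k) \<and> Vs k \<in> G0"
proof -
  from assms have "\<exists>N c Vs. V = (\<lambda>p. \<Sum>k<(N::nat). c k p *\<^sub>R Vs k p) \<and> (\<forall>k<N. smooth_on S (c k) \<and> Vs k \<in> G0)"
    unfolding smod_def by (simp only: mem_Collect_eq)
  then show ?thesis using that by blast
qed

lemma vf_smooth_smod:
  assumes S: "open S" and G: "\<forall>V\<in>G0. vf_smooth S V" and V: "V \<in> smod S G0"
  shows "vf_smooth S V"
proof -
  obtain N c Vs where V: "V = (\<lambda>p. \<Sum>k<(N::nat). c k p *\<^sub>R Vs k p)" and h: "\<forall>k<N. smooth_on S (c k) \<and> Vs k \<in> G0"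
    using V by (rule smod_E)
  show ?thesis unfolding vf_smooth_def V
  proof
    fix j
    have "smooth_on S (\<lambda>p. \<Sum>k<N. c k p * Vs k p $ j)"
      using h G by (intro smooth_sum smooth_mult S) (auto simp: vf_smooth_def)
    then show "smooth_on S (\<lambda>p. (\<Sum>k<N. c k p *\<^sub>R Vs k p) $ j)" by (simp add: sum_component)
  qed
qed

lemma smod_single: "V \<in> G0 \<Longrightarrow> V \<in> smod S G0"
  unfolding smod_def
  apply (rule CollectI, rule exI[of _ 1], rule exI[of _ "\<lambda>k p. 1"], rule exI[of _ "\<lambda>k. V"])
  by (auto simp: smooth_const)

lemma smod_scale: "V \<in> G0 \<Longrightarrow> (\<lambda>p. c *\<^sub>R V p) \<in> smod S G0"
  unfolding smod_def
  apply (rule CollectI, rule exI[of _ 1], rule exI[of _ "\<lambda>k p. c"], rule exI[of _ "\<lambda>k. V"])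
  by (auto simp: smooth_const)

lemma pd_sum:
  assumes "\<And>k. k < N \<Longrightarrow> (\<lambda>t. g k (p + t *\<^sub>R axis i 1)) differentiable (at (0::real))"
  shows "pd i (\<lambda>q. \<Sum>k<(N::nat). g k q) p = (\<Sum>k<N. pd i (g k) p)
         \<and> (\<lambda>t. \<Sum>k<N. g k (p + t *\<^sub>R axis i 1)) differentiable (at (0::real))"
  using assms
proof (induction N)
  case 0 then show ?case by (simp add: pd_const)
next
  case (Suc N)
  have IH: "pd i (\<lambda>q. \<Sum>k<N. g k q) p = (\<Sum>k<N. pd i (g k) p)"
    "(\<lambda>t. \<Sum>k<N. g k (p + t *\<^sub>R axis i 1)) differentiable (at (0::real))" using Suc by auto
  have d: "(\<lambda>t. g N (p + t *\<^sub>R axis i 1)) differentiable (at (0::real))" using Suc by auto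
  show ?case
    using pd_add[of "\<lambda>q. \<Sum>k<N. g k q" p i "g N", OF IH(2) d] IH(1) by simp
qed

lemma pd_constdir:
  assumes "\<forall>t. h (p + t *\<^sub>R axis i 1) = h p"
  shows "pd i h p = 0" "(\<lambda>t. h (p + t *\<^sub>R axis i 1)) differentiable (at (0::real))"
  using assms unfolding pd_def by simp_all




lemma jproj_add: "jproj (p + q) = jproj p + jproj q"
  by (simp add: jproj_def vec_eq_iff)
lemma jproj_scale: "jproj (t *\<^sub>R p) = t *\<^sub>R jproj p"
  by (simp add: jproj_def vec_eq_iff)
lemma jproj_axis_Some: "jproj (axis (Some k) 1) = axis k 1"
  by (simp add: jproj_def vec_eq_iff axis_def)
lemma jproj_axis_None: "jproj (axis None 1) = 0"
  by (simp add: jproj_def vec_eq_iff axis_def)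
lemma jproj_shift_Some: "jproj (p + t *\<^sub>R axis (Some k) 1) = jproj p + t *\<^sub>R axis k 1"
  by (simp add: jproj_add jproj_scale jproj_axis_Some)
lemma jproj_shift_None: "jproj (p + t *\<^sub>R axis None 1) = jproj p"
  by (simp add: jproj_add jproj_scale jproj_axis_None)

lemma linear_jproj: "linear jproj"
  by (auto simp: linear_iff jproj_add jproj_scale)

lemma continuous_jproj: "continuous_on A jproj"
  by (simp add: linear_continuous_on linear_conv_bounded_linear[symmetric] linear_jproj)

lemma pd_jproj_Some: "pd (Some k) (\<lambda>q. g (jproj q)) p = pd k g (jproj p)"
  unfolding pd_def by (simp add: jproj_shift_Some)
lemma pd_jproj_None: "pd None (\<lambda>q. g (jproj q)) p = 0"
  unfolding pd_def by (simp add: jproj_shift_None)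

lemma fold_pd_jproj:
  "fold pd is (\<lambda>q. g (jproj q)) = (if None \<in> set is then (\<lambda>q. 0) else (\<lambda>q. fold pd (map the is) g (jproj q)))"
proof (induction "is" arbitrary: g)
  case Nil then show ?case by simp
next
  case (Cons i "is")
  show ?case
  proof (cases i)
    case None
    then have "pd i (\<lambda>q. g (jproj q)) = (\<lambda>q. 0)" by (simp add: pd_jproj_None[abs_def])
    then show ?thesis using None by (simp add: fold_pd_const)
  next
    case (Some k)
    then have "pd i (\<lambda>q. g (jproj q)) = (\<lambda>q. pd k g (jproj q))" by (simp add: pd_jproj_Some[abs_def])
    then show ?thesis using Some Cons.IH[of "pd k g"] by simp
  qed
qed

lemma smooth_jproj:
  assumes "smooth_on U g"
  shows "smooth_on {q. jproj q \<in> U} (\<lambda>q. g (jproj q))"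
  unfolding smooth_on_def
proof (intro allI conjI ballI)
  fix "is" i and p :: "real^('a option)"
  show "continuous_on {q. jproj q \<in> U} (fold pd is (\<lambda>q. g (jproj q)))"
  proof (cases "None \<in> set is")
    case True then show ?thesis by (simp add: fold_pd_jproj)
  next
    case False
    have c: "continuous_on U (fold pd (map the is) g)" using assms smooth_on_def by blast
    have "continuous_on {q. jproj q \<in> U} (fold pd (map the is) g \<circ> jproj)"
      by (rule continuous_on_compose[OF continuous_jproj]) (rule continuous_on_subset[OF c], auto)
    then show ?thesis using False by (simp add: fold_pd_jproj o_def)
  qed
  assume p: "p \<in> {q. jproj q \<in> U}"
  show "(\<lambda>t. fold pd is (\<lambda>q. g (jproj q)) (p + t *\<^sub>R axis i 1)) differentiable at 0"
  proof (cases "None \<in> set is")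
    case True then show ?thesis by (simp add: fold_pd_jproj)
  next
    case False
    show ?thesis
    proof (cases i)
      case None
      then show ?thesis using False by (simp add: fold_pd_jproj jproj_shift_None)
    next
      case (Some k)
      have "(\<lambda>t. fold pd (map the is) g (jproj p + t *\<^sub>R axis k 1)) differentiable at 0"
        using assms p unfolding smooth_on_def by blast
      then show ?thesis using False Some by (simp add: fold_pd_jproj jproj_shift_Some)
    qed
  qed
qed

locale jet =
  fixes n :: nat and e :: "nat \<Rightarrow> 'j::finite" and f :: "real^'j \<Rightarrow> real" and U :: "(real^'j) set"
  assumes n3: "n \<ge> 3" and enum: "bij_betw e {..<n+2} (UNIV :: 'j set)"
    and U_open: "open U" and f_smooth: "smooth_on U f"
    and f_nondeg: "\<forall>p\<in>U. pd (e (n+1)) (pd (e (n+1)) f) p \<noteq> 0"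
begin

abbreviation "W \<equiv> {q. jproj q \<in> U}"
abbreviation "X1 \<equiv> X1_field n e f"
abbreviation "X2 \<equiv> X2_field n e"
abbreviation "G \<equiv> sections2 W X1 X2"
abbreviation "xc \<equiv> Some (e 0)"
abbreviation "yc i \<equiv> Some (e (Suc i))"

lemma W_open: "open W"
proof -
  have "open (jproj -` U)" by (rule open_vimage[OF U_open continuous_jproj])
  then show ?thesis by (simp add: vimage_def)
qed

lemma e_eq: "a < n+2 \<Longrightarrow> b < n+2 \<Longrightarrow> e a = e b \<longleftrightarrow> a = b"
  using bij_betw_imp_inj_on[OF enum] by (auto simp: inj_on_def)

lemma e_surj: "\<exists>m<n+2. e m = k"
proof -
  have "k \<in> e ` {..<n+2}" using bij_betw_imp_surj_on[OF enum] by simp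
  then show ?thesis by auto
qed

lemma coord_cases:
  obtains "c = None" | "c = xc" | i where "i \<le> n" "c = yc i"
proof (cases c)
  case None then show ?thesis using that by blast
next
  case (Some k)
  obtain m where m: "m < n+2" "e m = k" using e_surj by blast
  show ?thesis
  proof (cases m)
    case 0 then show ?thesis using that Some m by blast
  next
    case (Suc i) then show ?thesis using that(3)[of i] Some m by auto
  qed
qed

lemma X1_x: "X1 p $ xc = 1"
  by (simp add: X1_field_def)

lemma X1_y: "i < n \<Longrightarrow> X1 p $ yc i = p $ yc (Suc i)"
proof -
  assume i: "i < n"
  have ne: "e (Suc i) \<noteq> e 0" using e_eq[of "Suc i" 0] i by simp
  have ex: "\<exists>i'<n. e (Suc i) = e (i' + 1)" using i by auto
  have inv: "inv_into {..<n+2} e (e (Suc i)) = Suc i"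
    using inv_into_f_f[OF bij_betw_imp_inj_on[OF enum], of "Suc i"] i by simp
  show ?thesis using ne ex inv by (simp add: X1_field_def)
qed

lemma X1_yn: "X1 p $ yc n = 0"
proof -
  have ne: "e (Suc n) \<noteq> e 0" using e_eq[of "Suc n" 0] by simp
  have ex: "\<not> (\<exists>i'<n. e (Suc n) = e (i' + 1))"
  proof
    assume "\<exists>i'<n. e (Suc n) = e (i' + 1)"
    then obtain i' where "i' < n" "e (Suc n) = e (i'+1)" by blast
    then show False using e_eq[of "Suc n" "i'+1"] by simp
  qed
  show ?thesis using ne ex unfolding X1_field_def by (simp, blast)
qed

lemma X1_z: "X1 p $ None = f (jproj p)"
  by (simp add: X1_field_def)

lemma X2_comp: "X2 p $ c = (if c = yc n then 1 else 0)"
  by (simp add: X2_field_def axis_def)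

lemma yc_ne_x: "yc i \<noteq> xc" if "i \<le> n" using e_eq[of "Suc i" 0] that by auto
lemma yc_eq: "i \<le> n \<Longrightarrow> i' \<le> n \<Longrightarrow> yc i = yc i' \<longleftrightarrow> i = i'" using e_eq[of "Suc i" "Suc i'"] by auto

lemma smooth_X1: "smooth_on W (\<lambda>p. X1 p $ c)"
proof (cases c rule: coord_cases)
  case 1 then show ?thesis using smooth_jproj[OF f_smooth] by (simp add: X1_z)
next
  case 2 then show ?thesis by (simp add: X1_x smooth_const)
next
  case (3 i)
  show ?thesis
  proof (cases "i = n")
    case True then show ?thesis using 3 by (simp add: X1_yn smooth_const)
  next
    case False then show ?thesis using 3 by (simp add: X1_y smooth_coord)
  qed
qed

lemma vf_smooth_X1: "vf_smooth W X1"
  unfolding vf_smooth_def using smooth_X1 by blast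

lemma vf_smooth_X2: "vf_smooth W X2"
  unfolding vf_smooth_def X2_comp by (simp add: smooth_const)

lemma X1_in: "X1 \<in> G" and X2_in: "X2 \<in> G"
  unfolding sections2_def by (auto intro: smod_single)

lemma G_decomp:
  assumes "V \<in> G"
  shows "\<exists>a b. V p = a *\<^sub>R X1 p + b *\<^sub>R X2 p"
proof -
  obtain N c Vs where V: "V = (\<lambda>p. \<Sum>k<(N::nat). c k p *\<^sub>R Vs k p)" and h: "\<forall>k<N. smooth_on W (c k) \<and> Vs k \<in> {X1, X2}"
    using assms unfolding sections2_def by (rule smod_E)
  have "V p = (\<Sum>k<N. (if Vs k = X1 then c k p else 0) *\<^sub>R X1 p + (if Vs k = X1 then 0 else c k p) *\<^sub>R X2 p)"
    unfolding V
  proof (intro sum.cong refl)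
    fix k assume "k \<in> {..<N}"
    then have "Vs k = X1 \<or> Vs k = X2" using h by blast
    then show "c k p *\<^sub>R Vs k p = (if Vs k = X1 then c k p else 0) *\<^sub>R X1 p + (if Vs k = X1 then 0 else c k p) *\<^sub>R X2 p"
      by (cases "Vs k = X1") simp_all
  qed
  also have "\<dots> = (\<Sum>k<N. (if Vs k = X1 then c k p else 0)) *\<^sub>R X1 p + (\<Sum>k<N. (if Vs k = X1 then 0 else c k p)) *\<^sub>R X2 p"
    by (simp add: sum.distrib scaleR_sum_left)
  finally show ?thesis by blast
qed

lemma vf_smooth_G: "V \<in> G \<Longrightarrow> vf_smooth W V"
proof -
  assume "V \<in> G"
  then have V: "V \<in> smod W {X1, X2}" unfolding sections2_def .
  have "\<forall>V\<in>{X1, X2}. vf_smooth W V" using vf_smooth_X1 vf_smooth_X2 by simp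
  then show ?thesis by (rule vf_smooth_smod[OF W_open _ V])
qed


definition Inv :: "nat \<Rightarrow> (real^('j option) \<Rightarrow> real^('j option)) \<Rightarrow> bool" where
  "Inv m V \<longleftrightarrow> (\<forall>q\<in>W. \<forall>i<m. V q $ yc i = V q $ xc * q $ yc (Suc i))"

lemma Inv_mono: "m' \<le> m \<Longrightarrow> Inv m V \<Longrightarrow> Inv m' V"
  unfolding Inv_def by auto

lemma Inv_G: assumes "V \<in> G" shows "Inv n V"
  unfolding Inv_def
proof (intro ballI allI impI)
  fix q i assume q: "q \<in> W" and i: "i < n"
  obtain a b where ab: "V q = a *\<^sub>R X1 q + b *\<^sub>R X2 q" using G_decomp[OF assms] by blast
  have "yc i \<noteq> yc n" using yc_eq[of i n] i by simp
  moreover have "xc \<noteq> yc n" using yc_ne_x[of n] by simp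
  ultimately show "V q $ yc i = V q $ xc * q $ yc (Suc i)"
    using i by (simp add: ab X1_y X1_x X2_comp)
qed

lemma Inv_smod: assumes "\<forall>V\<in>G0. Inv m V" "V \<in> smod W G0" shows "Inv m V"
proof -
  obtain N c Vs where V: "V = (\<lambda>p. \<Sum>k<(N::nat). c k p *\<^sub>R Vs k p)" and h: "\<forall>k<N. smooth_on W (c k) \<and> Vs k \<in> G0"
    using assms(2) by (rule smod_E)
  show ?thesis unfolding Inv_def
  proof (intro ballI allI impI)
    fix q i assume q: "q \<in> W" and i: "i < m"
    have "V q $ yc i = (\<Sum>k<N. c k q * Vs k q $ yc i)" by (simp add: V sum_component)
    also have "\<dots> = (\<Sum>k<N. c k q * Vs k q $ xc * q $ yc (Suc i))"
    proof (intro sum.cong refl)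
      fix k assume "k \<in> {..<N}"
      then have "Inv m (Vs k)" using h assms(1) by blast
      then show "c k q * Vs k q $ yc i = c k q * Vs k q $ xc * q $ yc (Suc i)"
        using q i unfolding Inv_def by simp
    qed
    also have "\<dots> = V q $ xc * q $ yc (Suc i)" by (simp add: V sum_component sum_distrib_right)
    finally show "V q $ yc i = V q $ xc * q $ yc (Suc i)" .
  qed
qed

lemma sum_delta_lemma:
  fixes a b :: "'c::finite \<Rightarrow> real"
  shows "(\<Sum>l\<in>UNIV. a l * (b l * y + c * (if l = k then 1 else 0))) = (\<Sum>l\<in>UNIV. a l * b l) * y + c * a k"
proof -
  have "(\<Sum>l\<in>UNIV. a l * (b l * y + c * (if l = k then 1 else 0))) = (\<Sum>l\<in>UNIV. a l * b l * y + (if l = k then c * a l else 0))"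
    by (intro sum.cong refl) (auto simp: algebra_simps)
  also have "\<dots> = (\<Sum>l\<in>UNIV. a l * b l * y) + (\<Sum>l\<in>UNIV. (if l = k then c * a l else 0))"
    by (rule sum.distrib)
  also have "\<dots> = (\<Sum>l\<in>UNIV. a l * b l) * y + c * a k"
    by (simp add: sum_distrib_right)
  finally show ?thesis .
qed

lemma pd_Inv:
  assumes sB: "vf_smooth W B" and IB: "Inv m B" and i: "i < m" and q: "q \<in> W"
  shows "pd l (\<lambda>p. B p $ yc i) q = pd l (\<lambda>p. B p $ xc) q * q $ yc (Suc i) + B q $ xc * (if l = yc (Suc i) then 1 else 0)"
proof -
  have "pd l (\<lambda>p. B p $ yc i) q = pd l (\<lambda>p. B p $ xc * p $ yc (Suc i)) q"
    by (rule pd_local[OF W_open q]) (use IB i in \<open>auto simp: Inv_def\<close>)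
  also have "\<dots> = pd l (\<lambda>p. B p $ xc) q * q $ yc (Suc i) + B q $ xc * pd l (\<lambda>p. p $ yc (Suc i)) q"
    by (rule pd_mult(1)) (use sB q in \<open>auto simp: vf_smooth_def intro: smooth_diff diff_coord\<close>)
  finally show ?thesis by (simp add: pd_coord)
qed

lemma Inv_bracket:
  assumes sA: "vf_smooth W A" and sB: "vf_smooth W B" and IA: "Inv n A" and IB: "Inv (Suc m) B" and m: "Suc m \<le> n"
  shows "Inv m (lie_bracket A B)"
  unfolding Inv_def
proof (intro ballI allI impI)
  fix q i assume q: "q \<in> W" and i: "i < m"
  define y1 where "y1 = q $ yc (Suc i)"
  define y2 where "y2 = q $ yc (Suc (Suc i))"
  have pB: "\<And>l. pd l (\<lambda>p. B p $ yc i) q = pd l (\<lambda>p. B p $ xc) q * y1 + B q $ xc * (if l = yc (Suc i) then 1 else 0)"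
    using pd_Inv[OF sB IB _ q] i unfolding y1_def by simp
  have pA: "\<And>l. pd l (\<lambda>p. A p $ yc i) q = pd l (\<lambda>p. A p $ xc) q * y1 + A q $ xc * (if l = yc (Suc i) then 1 else 0)"
    using pd_Inv[OF sA IA _ q] i m unfolding y1_def by simp
  have e1: "vf_apply A (\<lambda>p. B p $ yc i) q = vf_apply A (\<lambda>p. B p $ xc) q * y1 + B q $ xc * A q $ yc (Suc i)"
    unfolding vf_apply_def pB by (rule sum_delta_lemma)
  have e2: "vf_apply B (\<lambda>p. A p $ yc i) q = vf_apply B (\<lambda>p. A p $ xc) q * y1 + A q $ xc * B q $ yc (Suc i)"
    unfolding vf_apply_def pA by (rule sum_delta_lemma)
  have a2: "A q $ yc (Suc i) = A q $ xc * y2" using IA q i m unfolding Inv_def y2_def by simp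
  have b2: "B q $ yc (Suc i) = B q $ xc * y2" using IB q i m unfolding Inv_def y2_def by simp
  show "lie_bracket A B q $ yc i = lie_bracket A B q $ xc * q $ yc (Suc i)"
    unfolding lie_bracket_def y1_def[symmetric] using e1 e2 a2 b2
    by (simp add: algebra_simps)
qed

lemma derived2: "derived W G 2 = smod W (G \<union> {lie_bracket A B | A B. A \<in> G \<and> B \<in> G})"
  by (simp add: numeral_2_eq_2)

lemma derived3: "derived W G 3 = smod W (derived W G 2 \<union> {lie_bracket A B | A B. A \<in> G \<and> B \<in> derived W G 2})"
  by (simp add: numeral_3_eq_3 numeral_2_eq_2)

lemma D2_props: assumes "V \<in> derived W G 2" shows "vf_smooth W V \<and> Inv (n - 1) V"
proof -
  have "\<forall>V\<in>G \<union> {lie_bracket A B | A B. A \<in> G \<and> B \<in> G}. vf_smooth W V \<and> Inv (n-1) V"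
  proof
    fix V assume "V \<in> G \<union> {lie_bracket A B | A B. A \<in> G \<and> B \<in> G}"
    then show "vf_smooth W V \<and> Inv (n-1) V"
    proof
      assume "V \<in> G" then show ?thesis using vf_smooth_G Inv_G Inv_mono[of "n-1" n] by simp
    next
      assume "V \<in> {lie_bracket A B | A B. A \<in> G \<and> B \<in> G}"
      then obtain A B where AB: "V = lie_bracket A B" "A \<in> G" "B \<in> G" by blast
      have "Inv (n-1) (lie_bracket A B)" using n3 
        by (intro Inv_bracket vf_smooth_G Inv_G AB) (auto intro: Inv_mono[OF _ Inv_G[OF AB(3)]])
      then show ?thesis using AB vf_smooth_bracket[OF W_open vf_smooth_G vf_smooth_G] by simp
    qed
  qed
  then show ?thesis using assms unfolding derived2
    using vf_smooth_smod[OF W_open, of "G \<union> {lie_bracket A B | A B. A \<in> G \<and> B \<in> G}" V]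
      Inv_smod[of "G \<union> {lie_bracket A B | A B. A \<in> G \<and> B \<in> G}" "n-1" V] by blast
qed

lemma D3_Inv: assumes "V \<in> derived W G 3" shows "Inv (n - 2) V"
proof -
  have "\<forall>V\<in>derived W G 2 \<union> {lie_bracket A B | A B. A \<in> G \<and> B \<in> derived W G 2}. Inv (n-2) V"
  proof
    fix V assume "V \<in> derived W G 2 \<union> {lie_bracket A B | A B. A \<in> G \<and> B \<in> derived W G 2}"
    then show "Inv (n-2) V"
    proof
      assume "V \<in> derived W G 2" then show ?thesis using D2_props Inv_mono[of "n-2" "n-1"] by simp
    next
      assume "V \<in> {lie_bracket A B | A B. A \<in> G \<and> B \<in> derived W G 2}"
      then obtain A B where AB: "V = lie_bracket A B" "A \<in> G" "B \<in> derived W G 2" by blast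
      have "Inv (n-2) (lie_bracket A B)"
      proof (rule Inv_bracket[OF vf_smooth_G[OF AB(2)] _ Inv_G[OF AB(2)]])
        show "vf_smooth W B" "Inv (Suc (n-2)) B" using D2_props[OF AB(3)] n3 by (auto simp: Suc_diff_Suc numeral_2_eq_2)
        show "Suc (n-2) \<le> n" using n3 by simp
      qed
      then show ?thesis using AB by simp
    qed
  qed
  then show ?thesis using assms unfolding derived3
    using Inv_smod[of "derived W G 2 \<union> {lie_bracket A B | A B. A \<in> G \<and> B \<in> derived W G 2}" "n-2" V] by blast
qed


lemma vf_apply_X2: "vf_apply X2 g p = pd (yc n) g p"
proof -
  have "vf_apply X2 g p = (\<Sum>i\<in>UNIV. if i = yc n then pd i g p else 0)"
    unfolding vf_apply_def X2_comp by (intro sum.cong refl) simp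
  also have "\<dots> = pd (yc n) g p" by simp
  finally show ?thesis .
qed

lemma vf_apply_const: "vf_apply V (\<lambda>q. c) p = 0"
  unfolding vf_apply_def by (simp add: pd_const)

lemma bracket_X2: "lie_bracket X2 V p $ j = pd (yc n) (\<lambda>q. V q $ j) p"
  unfolding lie_bracket_def by (simp add: vf_apply_X2 X2_comp vf_apply_const)

abbreviation "B1 \<equiv> lie_bracket X2 X1"
abbreviation "B2 \<equiv> lie_bracket X2 B1"

lemma B1_comp: "B1 p $ j = (if j = None then pd (e (Suc n)) f (jproj p) else if j = yc (n - 1) then 1 else 0)"
proof (cases j rule: coord_cases)
  case 1
  have "(\<lambda>q. X1 q $ j) = (\<lambda>q. f (jproj q))" using 1 by (simp add: X1_z)
  then show ?thesis using 1 by (simp add: bracket_X2 pd_jproj_Some)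
next
  case 2
  have "(\<lambda>q. X1 q $ j) = (\<lambda>q. 1)" using 2 by (simp add: X1_x)
  moreover have "xc \<noteq> yc (n-1)" using yc_ne_x[of "n-1"] by auto
  ultimately show ?thesis using 2 by (simp add: bracket_X2 pd_const)
next
  case (3 i)
  show ?thesis
  proof (cases "i = n")
    case True
    have "(\<lambda>q. X1 q $ j) = (\<lambda>q. 0)" using 3 True by (simp add: X1_yn)
    moreover have "yc n \<noteq> yc (n-1)" using yc_eq[of n "n-1"] n3 by auto
    ultimately show ?thesis using 3 True by (simp add: bracket_X2 pd_const)
  next
    case False
    then have i: "i < n" using 3 by simp
    have "(\<lambda>q. X1 q $ j) = (\<lambda>q. q $ yc (Suc i))" using 3 i by (simp add: X1_y)
    moreover have "yc n = yc (Suc i) \<longleftrightarrow> Suc i = n" using yc_eq[of n "Suc i"] i by auto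
    moreover have "yc i = yc (n-1) \<longleftrightarrow> Suc i = n" using yc_eq[of i "n-1"] i by auto
    ultimately show ?thesis using 3 by (simp add: bracket_X2 pd_coord)
  qed
qed

lemma B2_comp: "B2 p $ j = (if j = None then pd (e (Suc n)) (pd (e (Suc n)) f) (jproj p) else 0)"
proof (cases "j = None")
  case True
  have "(\<lambda>q. B1 q $ j) = (\<lambda>q. pd (e (Suc n)) f (jproj q))" using True by (simp add: B1_comp)
  then show ?thesis using True by (simp add: bracket_X2 pd_jproj_Some)
next
  case False
  then obtain k where k: "j = Some k" by auto
  have "(\<lambda>q. B1 q $ j) = (\<lambda>q. if j = yc (n - 1) then 1 else 0)" using k by (simp add: B1_comp)
  then show ?thesis using k by (simp add: bracket_X2 pd_const)
qed

lemma B1_in: "B1 \<in> derived W G 2"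
  unfolding derived2 by (rule smod_single) (use X1_in X2_in in blast)

lemma B2_in: "B2 \<in> derived W G 3"
  unfolding derived3 by (rule smod_single) (use X2_in B1_in in blast)

lemma lies_in_z: "lies_in W (derived W G 3) (\<lambda>q. c *\<^sub>R axis None 1)"
  unfolding lies_in_def
proof (intro ballI CollectI)
  fix q assume q: "q \<in> W"
  define F where "F = pd (e (Suc n)) (pd (e (Suc n)) f) (jproj q)"
  have F: "F \<noteq> 0" using f_nondeg q unfolding F_def by simp
  have "c *\<^sub>R axis None 1 = (c / F) *\<^sub>R B2 q"
    using F by (simp add: vec_eq_iff B2_comp F_def[symmetric] axis_def)
  moreover have "(\<lambda>p. (c / F) *\<^sub>R B2 p) \<in> derived W G 3"
    unfolding derived3 by (rule smod_scale) (use X2_in B1_in in blast)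
  ultimately show "\<exists>V. c *\<^sub>R axis None 1 = V q \<and> V \<in> derived W G 3"
    by (intro exI[of _ "\<lambda>p. (c / F) *\<^sub>R B2 p"]) simp
qed


lemma X1_shiftz: "X1 (p + t *\<^sub>R axis None 1) = X1 p"
proof -
  have a: "\<And>m. (p + t *\<^sub>R axis None 1) $ Some m = p $ Some m" by (simp add: axis_def)
  show ?thesis unfolding X1_field_def by (simp only: jproj_shift_None a)
qed

lemma X2_shiftz: "X2 (p + t *\<^sub>R axis None 1) = X2 p"
  unfolding X2_field_def by simp

lemma sym_z:
  assumes sY: "vf_smooth W Y" and Yz: "\<forall>q\<in>W. Y q = cc *\<^sub>R axis None 1"
  shows "inf_symmetry W G Y"
  unfolding inf_symmetry_def
proof (intro conjI ballI sY)
  fix V assume "V \<in> G"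
  then obtain N c Vs where V: "V = (\<lambda>p. \<Sum>k<(N::nat). c k p *\<^sub>R Vs k p)" and h: "\<forall>k<N. smooth_on W (c k) \<and> Vs k \<in> {X1, X2}"
    unfolding sections2_def by (rule smod_E)
  define V' where "V' = (\<lambda>p. \<Sum>k<N. (cc * pd None (c k) p) *\<^sub>R Vs k p)"
  have V'G: "V' \<in> G"
    unfolding sections2_def smod_def V'_def
    apply (rule CollectI, rule exI[of _ N], rule exI[of _ "\<lambda>k p. cc * pd None (c k) p"], rule exI[of _ Vs])
    using h by (auto intro!: smooth_mult W_open smooth_const smooth_pd)
  have "\<forall>p\<in>W. lie_bracket Y V p = V' p"
  proof
    fix p assume p: "p \<in> W"
    show "lie_bracket Y V p = V' p"
      unfolding vec_eq_iff
    proof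
      fix j
      have pY: "pd i (\<lambda>q. Y q $ j) p = 0" for i
      proof -
        have "pd i (\<lambda>q. Y q $ j) p = pd i (\<lambda>q. (cc *\<^sub>R axis None 1) $ j) p"
          by (rule pd_local[OF W_open p]) (use Yz in simp)
        then show ?thesis by (simp add: pd_const)
      qed
      have a1: "vf_apply V (\<lambda>q. Y q $ j) p = 0" unfolding vf_apply_def pY by simp
      have shift: "\<And>k t. k < N \<Longrightarrow> Vs k (p + t *\<^sub>R axis None 1) $ j = Vs k p $ j"
      proof -
        fix k t assume "k < N"
        then have "Vs k = X1 \<or> Vs k = X2" using h by blast
        then show "Vs k (p + t *\<^sub>R axis None 1) $ j = Vs k p $ j"
          by (cases "Vs k = X1") (simp_all add: X1_shiftz X2_shiftz)
      qed
      have tm: "pd None (\<lambda>q. c k q * Vs k q $ j) p = pd None (c k) p * Vs k p $ j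
          \<and> (\<lambda>t. c k (p + t *\<^sub>R axis None 1) * Vs k (p + t *\<^sub>R axis None 1) $ j) differentiable (at 0)"
        if k: "k < N" for k
      proof -
        have d1: "(\<lambda>t. c k (p + t *\<^sub>R axis None 1)) differentiable (at 0)"
          using h k p smooth_diff by blast
        have c2: "\<forall>t. (\<lambda>q. Vs k q $ j) (p + t *\<^sub>R axis None 1) = (\<lambda>q. Vs k q $ j) p"
          using shift k by simp
        show ?thesis
          using pd_mult[of "c k" p None "\<lambda>q. Vs k q $ j", OF d1 pd_constdir(2)[OF c2]] pd_constdir(1)[OF c2]
          by simp
      qed
      have "pd None (\<lambda>q. V q $ j) p = pd None (\<lambda>q. \<Sum>k<N. c k q * Vs k q $ j) p"
        by (simp add: V sum_component)
      also have "\<dots> = (\<Sum>k<N. pd None (\<lambda>q. c k q * Vs k q $ j) p)"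
        using pd_sum[of N "\<lambda>k q. c k q * Vs k q $ j" p None] tm by blast
      also have "\<dots> = (\<Sum>k<N. pd None (c k) p * Vs k p $ j)"
        using tm by simp
      finally have pV: "pd None (\<lambda>q. V q $ j) p = (\<Sum>k<N. pd None (c k) p * Vs k p $ j)" .
      have a2: "vf_apply Y (\<lambda>q. V q $ j) p = cc * pd None (\<lambda>q. V q $ j) p"
      proof -
        have "vf_apply Y (\<lambda>q. V q $ j) p = (\<Sum>i\<in>UNIV. if i = None then cc * pd i (\<lambda>q. V q $ j) p else 0)"
          unfolding vf_apply_def using Yz p by (intro sum.cong refl) (simp add: axis_def)
        then show ?thesis by simp
      qed
      show "lie_bracket Y V p $ j = V' p $ j"
        unfolding lie_bracket_def V'_def using a1 a2 pV
        by (simp add: sum_component sum_distrib_left mult.assoc)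
    qed
  qed
  then show "sec_in W G (lie_bracket Y V)" unfolding sec_in_def using V'G by blast
qed

end



lemma deriv_line:
  fixes g :: "real^'m::finite \<Rightarrow> real"
  assumes "pd c g (p + s *\<^sub>R axis c 1) = 0"
    and "(\<lambda>u. g ((p + s *\<^sub>R axis c 1) + u *\<^sub>R axis c 1)) differentiable (at 0)"
  shows "DERIV (\<lambda>s. g (p + s *\<^sub>R axis c 1)) s :> 0"
proof -
  have "DERIV (\<lambda>u. g ((p + s *\<^sub>R axis c 1) + u *\<^sub>R axis c 1)) 0 :> 0"
    using pd_DERIV[OF assms(2)] assms(1) by simp
  moreover have "(\<lambda>u. g ((p + s *\<^sub>R axis c 1) + u *\<^sub>R axis c 1)) = (\<lambda>u. g (p + (u + s) *\<^sub>R axis c 1))"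
    by (simp add: scaleR_add_left algebra_simps)
  ultimately have "DERIV (\<lambda>u. (\<lambda>s. g (p + s *\<^sub>R axis c 1)) (u + s)) 0 :> 0" by simp
  then show ?thesis using DERIV_shift[of "\<lambda>s. g (p + s *\<^sub>R axis c 1)" 0 0 s] by simp
qed

lemma line_const:
  fixes g :: "real^'m::finite \<Rightarrow> real"
  assumes I: "convex I" and inS: "\<forall>s\<in>I. p + s *\<^sub>R axis c 1 \<in> S"
    and z: "\<forall>q\<in>S. pd c g q = 0" and d: "pdiff S g"
    and s12: "s1 \<in> I" "s2 \<in> I"
  shows "g (p + s1 *\<^sub>R axis c 1) = g (p + s2 *\<^sub>R axis c 1)"
proof -
  have "\<exists>c0. \<forall>s\<in>I. g (p + s *\<^sub>R axis c 1) = c0"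
  proof (rule has_field_derivative_zero_constant[OF I])
    fix s assume s: "s \<in> I"
    have "DERIV (\<lambda>s. g (p + s *\<^sub>R axis c 1)) s :> 0"
      by (rule deriv_line) (use inS z d s in \<open>auto simp: pdiff_def\<close>)
    then show "((\<lambda>s. g (p + s *\<^sub>R axis c 1)) has_field_derivative 0) (at s within I)"
      by (rule has_field_derivative_at_within)
  qed
  then show ?thesis using s12 by auto
qed

lemma INV:
  fixes g :: "real^'m::finite \<Rightarrow> real"
  assumes S: "open S" and sg: "smooth_on S g" and z: "\<forall>q\<in>S. pd d g q = 0" and q: "q \<in> S"
  shows "pd d (pd l g) q = 0"
proof -
  obtain r where r: "r > 0" "ball q r \<subseteq> S" using S q open_contains_ball by blast
  have pt: "q + t *\<^sub>R axis l 1 + s *\<^sub>R axis d 1 \<in> S" if "\<bar>t\<bar> < r/2" "\<bar>s\<bar> < r/2" for s t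
  proof -
    have "norm (t *\<^sub>R axis l (1::real) + s *\<^sub>R axis d 1) \<le> norm (t *\<^sub>R axis l (1::real)) + norm (s *\<^sub>R axis d (1::real))"
      by (rule norm_triangle_ineq)
    also have "\<dots> = \<bar>t\<bar> + \<bar>s\<bar>" by simp
    finally have "norm (t *\<^sub>R axis l (1::real) + s *\<^sub>R axis d 1) < r" using that by simp
    moreover have "dist q (q + t *\<^sub>R axis l 1 + s *\<^sub>R axis d 1) = norm (t *\<^sub>R axis l (1::real) + s *\<^sub>R axis d 1)"
      by (metis add.assoc add_diff_cancel_left' dist_commute dist_norm)
    ultimately have "q + t *\<^sub>R axis l 1 + s *\<^sub>R axis d 1 \<in> ball q r" by simp
    then show ?thesis using r by blast
  qed
  have inner: "g (q + s *\<^sub>R axis d 1 + t *\<^sub>R axis l 1) = g (q + t *\<^sub>R axis l 1)"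
    if "\<bar>t\<bar> < r/2" "\<bar>s\<bar> < r/2" for s t
  proof -
    have "g (q + t *\<^sub>R axis l 1 + s *\<^sub>R axis d 1) = g (q + t *\<^sub>R axis l 1 + 0 *\<^sub>R axis d 1)"
    proof (rule line_const[OF convex_ball[of 0 "r/2"] _ z smooth_pdiff[OF sg]])
      show "\<forall>s\<in>ball 0 (r / 2). q + t *\<^sub>R axis l 1 + s *\<^sub>R axis d 1 \<in> S" using pt that by auto
      show "s \<in> ball 0 (r/2)" "0 \<in> ball 0 (r/2)" using that r by auto
    qed
    then show ?thesis by (simp add: algebra_simps)
  qed
  have loc: "pd l g (q + s *\<^sub>R axis d 1) = pd l g q" if "\<bar>s\<bar> < r/2" for s
    unfolding pd_def
  proof (rule deriv_cong_ev[OF _ refl])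
    have "eventually (\<lambda>t. t \<in> ball 0 (r/2)) (nhds (0::real))"
      by (rule eventually_nhds_in_open) (use r in auto)
    then have "eventually (\<lambda>t. \<bar>t\<bar> < r/2) (nhds (0::real))"
      by (rule eventually_mono) (simp add: dist_real_def)
    then show "\<forall>\<^sub>F t in nhds 0. g (q + s *\<^sub>R axis d 1 + t *\<^sub>R axis l 1) = g (q + t *\<^sub>R axis l 1)"
      by (rule eventually_mono) (use inner that in auto)
  qed
  have "pd d (pd l g) q = deriv (\<lambda>s. pd l g q) 0"
    unfolding pd_def[of d]
  proof (rule deriv_cong_ev[OF _ refl])
    have "eventually (\<lambda>t. t \<in> ball 0 (r/2)) (nhds (0::real))"
      by (rule eventually_nhds_in_open) (use r in auto)
    then have "eventually (\<lambda>t. \<bar>t\<bar> < r/2) (nhds (0::real))"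
      by (rule eventually_mono) (simp add: dist_real_def)
    then show "\<forall>\<^sub>F s in nhds 0. pd l g (q + s *\<^sub>R axis d 1) = pd l g q"
      by (rule eventually_mono) (use loc in auto)
  qed
  then show ?thesis by simp
qed

lemma pd_zero_const:
  fixes g :: "real^'m::finite \<Rightarrow> real"
  assumes S: "open S" and conn: "connected S" and d: "pdiff S g" and z: "\<forall>l. \<forall>q\<in>S. pd l g q = 0"
  shows "\<exists>c. \<forall>x\<in>S. g x = c"
proof -
  have "g constant_on S"
  proof (rule locally_constant_imp_constant[OF conn])
    fix a assume a: "a \<in> S"
    obtain r where r: "r > 0" "ball a r \<subseteq> S" using S a open_contains_ball by blast
    have "\<forall>x\<in>ball a r. g x = g a"
    proof
      fix x assume x: "x \<in> ball a r"
      define mix where "mix K = (\<chi> i. if i \<in> K then x $ i else a $ i)" for K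
      have mixK: "g (mix K) = g a" if "finite K" for K
        using that
      proof (induction K rule: finite_induct)
        case empty
        then show ?case by (simp add: mix_def)
      next
        case (insert c K)
        define \<delta> where "\<delta> = x $ c - a $ c"
        have m: "mix (insert c K) = mix K + \<delta> *\<^sub>R axis c 1"
          unfolding vec_eq_iff
        proof
          fix i show "mix (insert c K) $ i = (mix K + \<delta> *\<^sub>R axis c 1) $ i"
            using insert.hyps(2) by (cases "i = c") (simp_all add: mix_def \<delta>_def axis_def)
        qed
        have zc: "\<forall>q\<in>S. pd c g q = 0" using z by blast
        have "g (mix K + \<delta> *\<^sub>R axis c 1) = g (mix K + 0 *\<^sub>R axis c 1)"
        proof (rule line_const[OF convex_closed_segment[of 0 \<delta>] _ zc d])
          show "\<forall>s\<in>closed_segment 0 \<delta>. mix K + s *\<^sub>R axis c 1 \<in> S"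
          proof
            fix s assume s: "s \<in> closed_segment 0 \<delta>"
            then have sb: "\<bar>s\<bar> \<le> \<bar>\<delta>\<bar>" by (cases "0 \<le> \<delta>") (auto simp: closed_segment_eq_real_ivl)
            have "norm (mix K + s *\<^sub>R axis c 1 - a) \<le> norm (x - a)"
            proof (rule norm_le_componentwise_cart)
              fix i
              have comp: "(mix K + s *\<^sub>R axis c 1 - a) $ i = (if i = c then s else if i \<in> K then x$i - a$i else 0)"
                using insert.hyps(2) by (simp add: mix_def axis_def)
              show "norm ((mix K + s *\<^sub>R axis c 1 - a) $ i) \<le> norm ((x - a) $ i)"
              proof (cases "i = c")
                case True then show ?thesis using comp sb by (simp add: \<delta>_def)
              next
                case False then show ?thesis using comp by simp
              qed
            qed
            also have "\<dots> < r" using x by (metis dist_norm dist_commute mem_ball)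
            finally have "mix K + s *\<^sub>R axis c 1 \<in> ball a r" by (metis dist_norm dist_commute mem_ball)
            then show "mix K + s *\<^sub>R axis c 1 \<in> S" using r by blast
          qed
        qed (simp_all add: ends_in_segment)
        then show ?case using m insert.IH by simp
      qed
      have "mix UNIV = x" by (simp add: mix_def vec_eq_iff)
      then show "g x = g a" using mixK[of UNIV] by simp
    qed
    moreover have "openin (top_of_set S) (ball a r)" using r by (intro open_subset) auto
    moreover have "a \<in> ball a r" using r by simp
    ultimately show "\<exists>T. openin (top_of_set S) T \<and> a \<in> T \<and> (\<forall>x\<in>T. g x = g a)"
      by blast
  qed
  then show ?thesis unfolding constant_on_def by blast
qed

lemma pd_sumU:
  assumes "finite A" "\<And>k. k \<in> A \<Longrightarrow> (\<lambda>t. g k (p + t *\<^sub>R axis i 1)) differentiable (at (0::real))"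
  shows "pd i (\<lambda>q. \<Sum>k\<in>A. g k q) p = (\<Sum>k\<in>A. pd i (g k) p)
         \<and> (\<lambda>t. \<Sum>k\<in>A. g k (p + t *\<^sub>R axis i 1)) differentiable (at (0::real))"
  using assms
proof (induction A rule: finite_induct)
  case empty then show ?case by (simp add: pd_const)
next
  case (insert x F)
  have IH: "pd i (\<lambda>q. \<Sum>k\<in>F. g k q) p = (\<Sum>k\<in>F. pd i (g k) p)"
    "(\<lambda>t. \<Sum>k\<in>F. g k (p + t *\<^sub>R axis i 1)) differentiable (at (0::real))" using insert by auto
  have d: "(\<lambda>t. g x (p + t *\<^sub>R axis i 1)) differentiable (at (0::real))" using insert by auto
  show ?case
    using pd_add[of "g x" p i "\<lambda>q. \<Sum>k\<in>F. g k q", OF d IH(2)] IH(1) insert.hyps by simp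
qed

lemma pd_times_coord:
  fixes a h :: "real^'m::finite \<Rightarrow> real"
  assumes S: "open S" and q: "q \<in> S" and ha: "\<forall>p\<in>S. h p = a p * p $ c" and sa: "smooth_on S a"
  shows "pd l h q = pd l a q * q $ c + a q * (if l = c then 1 else 0)"
proof -
  have "pd l h q = pd l (\<lambda>p. a p * p $ c) q" by (rule pd_local[OF S q ha])
  also have "\<dots> = pd l a q * q $ c + a q * pd l (\<lambda>p. p $ c) q"
    by (rule pd_mult(1)) (use sa q in \<open>auto intro: smooth_diff diff_coord\<close>)
  finally show ?thesis by (simp add: pd_coord)
qed




context jet begin

lemma sec_decomp:
  assumes "sec_in W G V" "q \<in> W"
  shows "\<exists>a b. V q = a *\<^sub>R X1 q + b *\<^sub>R X2 q"
proof -
  obtain V' where V': "V' \<in> G" "\<forall>p\<in>W. V p = V' p" using assms(1) unfolding sec_in_def by blast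
  show ?thesis using G_decomp[OF V'(1), of q] V'(2) assms(2) by simp
qed

lemma bracket_Y_X2: "lie_bracket Y X2 p $ j = - pd (yc n) (\<lambda>q. Y q $ j) p"
proof -
  have "(\<lambda>q. X2 q $ j) = (\<lambda>q. if j = yc n then 1 else 0)" by (simp add: X2_comp)
  then show ?thesis unfolding lie_bracket_def by (simp add: vf_apply_X2 vf_apply_const)
qed

lemma vf_apply_coord: "vf_apply Y (\<lambda>q. q $ c) p = Y p $ c"
proof -
  have "vf_apply Y (\<lambda>q. q $ c) p = (\<Sum>i\<in>UNIV. if i = c then Y p $ i else 0)"
    unfolding vf_apply_def pd_coord by (intro sum.cong refl) simp
  then show ?thesis by simp
qed

lemma X1_fun_y: "i < n \<Longrightarrow> (\<lambda>q. X1 q $ yc i) = (\<lambda>q. q $ yc (Suc i))"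
  by (rule ext) (simp add: X1_y)

lemma X1_fun_x: "(\<lambda>q. X1 q $ xc) = (\<lambda>q. 1)"
  by (rule ext) (simp add: X1_x)

lemma X1_fun_z: "(\<lambda>q. X1 q $ None) = (\<lambda>q. f (jproj q))"
  by (rule ext) (simp add: X1_z)

lemma X1_fun_yn: "(\<lambda>q. X1 q $ yc n) = (\<lambda>q. 0)"
  by (rule ext) (simp add: X1_yn)

lemma pdX1:
  assumes m: "1 \<le> m" "m \<le> n"
  shows "pd (yc m) (\<lambda>p. X1 p $ l) q = (if l = None then pd (e (Suc m)) f (jproj q) else if l = yc (m-1) then 1 else 0)"
proof (cases l rule: coord_cases)
  case 1 then show ?thesis by (simp add: X1_fun_z pd_jproj_Some)
next
  case 2
  moreover have "xc \<noteq> yc (m-1)" using e_eq[of 0 m] m by auto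
  ultimately show ?thesis by (simp add: X1_fun_x pd_const)
next
  case (3 i)
  show ?thesis
  proof (cases "i = n")
    case True
    moreover have "yc n \<noteq> yc (m-1)" using yc_eq[of n "m-1"] m by auto
    ultimately show ?thesis using 3 by (simp add: X1_fun_yn pd_const)
  next
    case False
    then have i: "i < n" using 3 by simp
    have "yc m = yc (Suc i) \<longleftrightarrow> m = Suc i" using yc_eq[of m "Suc i"] i m by auto
    moreover have "yc i = yc (m-1) \<longleftrightarrow> m = Suc i" using yc_eq[of i "m-1"] i m by auto
    ultimately show ?thesis using 3 i by (simp add: X1_fun_y pd_coord)
  qed
qed

lemma zeta_K:
  assumes m: "1 \<le> m" "m \<le> n" and sg: "smooth_on W g"
    and zm: "\<forall>q\<in>W. pd (yc m) g q = 0" and E: "\<forall>q\<in>W. vf_apply X1 g q = 0" and q: "q \<in> W"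
  shows "pd (yc (m-1)) g q + pd (e (Suc m)) f (jproj q) * pd None g q = 0"
proof -
  have "pd (yc m) (vf_apply X1 g) q = pd (yc m) (\<lambda>p. 0) q"
    by (rule pd_local[OF W_open q]) (use E in simp)
  then have z: "pd (yc m) (vf_apply X1 g) q = 0" by (simp add: pd_const)
  have tm: "pd (yc m) (\<lambda>p. X1 p $ l * pd l g p) q = pd (yc m) (\<lambda>p. X1 p $ l) q * pd l g q
     \<and> (\<lambda>t. X1 (q + t *\<^sub>R axis (yc m) 1) $ l * pd l g (q + t *\<^sub>R axis (yc m) 1)) differentiable (at 0)" for l
  proof -
    have d1: "(\<lambda>t. X1 (q + t *\<^sub>R axis (yc m) 1) $ l) differentiable (at 0)"
      using smooth_diff[OF smooth_X1 q] by simp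
    have d2: "(\<lambda>t. pd l g (q + t *\<^sub>R axis (yc m) 1)) differentiable (at 0)"
      using smooth_diff[OF smooth_pd[OF sg] q] by simp
    have "pd (yc m) (pd l g) q = 0" by (rule INV[OF W_open sg zm q])
    then show ?thesis using pd_mult[of "\<lambda>p. X1 p $ l" q "yc m" "pd l g", OF d1 d2] by simp
  qed
  have "pd (yc m) (vf_apply X1 g) q = (\<Sum>l\<in>UNIV. pd (yc m) (\<lambda>p. X1 p $ l * pd l g p) q)"
    unfolding vf_apply_def[abs_def] using pd_sumU[of UNIV "\<lambda>l p. X1 p $ l * pd l g p" q "yc m"] tm by simp
  also have "\<dots> = (\<Sum>l\<in>UNIV. (if l = None then pd (e (Suc m)) f (jproj q) * pd None g q else 0)
                              + (if l = yc (m-1) then pd (yc (m-1)) g q else 0))"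
    using tm by (intro sum.cong refl) (simp add: pdX1[OF m])
  also have "\<dots> = pd (e (Suc m)) f (jproj q) * pd None g q + pd (yc (m-1)) g q"
    by (simp add: sum.distrib)
  finally show ?thesis using z by simp
qed

lemma zeta_all:
  assumes sg: "smooth_on W g" and zn: "\<forall>q\<in>W. pd (yc n) g q = 0" and E: "\<forall>q\<in>W. vf_apply X1 g q = 0"
  shows "\<forall>l. \<forall>q\<in>W. pd l g q = 0"
proof -
  define F1 where "F1 = pd (e (Suc n)) f"
  have A1: "\<forall>q\<in>W. pd (yc (n-1)) g q + F1 (jproj q) * pd None g q = 0"
    using zeta_K[OF _ _ sg zn E] n3 unfolding F1_def by auto
  have hz: "\<forall>q\<in>W. pd None g q = 0"
  proof
    fix q assume q: "q \<in> W"
    have "pd (yc n) (\<lambda>p. pd (yc (n-1)) g p + F1 (jproj p) * pd None g p) q = pd (yc n) (\<lambda>p. 0) q"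
      by (rule pd_local[OF W_open q]) (use A1 in simp)
    then have z: "pd (yc n) (\<lambda>p. pd (yc (n-1)) g p + F1 (jproj p) * pd None g p) q = 0" by (simp add: pd_const)
    have sF1: "smooth_on W (\<lambda>p. F1 (jproj p))" unfolding F1_def by (intro smooth_jproj smooth_pd f_smooth)
    have d1: "(\<lambda>t. pd (yc (n-1)) g (q + t *\<^sub>R axis (yc n) 1)) differentiable (at 0)"
      using smooth_diff[OF smooth_pd[OF sg] q] by simp
    have d2: "(\<lambda>t. F1 (jproj (q + t *\<^sub>R axis (yc n) 1))) differentiable (at 0)"
      using smooth_diff[OF sF1 q] by simp
    have d3: "(\<lambda>t. pd None g (q + t *\<^sub>R axis (yc n) 1)) differentiable (at 0)"
      using smooth_diff[OF smooth_pd[OF sg] q] by simp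
    have i1: "pd (yc n) (pd (yc (n-1)) g) q = 0" by (rule INV[OF W_open sg zn q])
    have i2: "pd (yc n) (pd None g) q = 0" by (rule INV[OF W_open sg zn q])
    have "pd (yc n) (\<lambda>p. pd (yc (n-1)) g p + F1 (jproj p) * pd None g p) q
          = pd (yc n) (pd (yc (n-1)) g) q + pd (yc n) (\<lambda>p. F1 (jproj p) * pd None g p) q"
      using pd_add(1)[of "pd (yc (n-1)) g" q "yc n" "\<lambda>p. F1 (jproj p) * pd None g p", OF d1 pd_mult(2)[OF d2 d3]] .
    also have "\<dots> = pd (yc n) (\<lambda>p. F1 (jproj p)) q * pd None g q"
      using pd_mult(1)[OF d2 d3] i1 i2 by simp
    also have "\<dots> = pd (e (Suc n)) F1 (jproj q) * pd None g q" by (simp add: pd_jproj_Some)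
    finally have "pd (e (Suc n)) F1 (jproj q) * pd None g q = 0" using z by simp
    moreover have "pd (e (Suc n)) F1 (jproj q) \<noteq> 0" using f_nondeg q unfolding F1_def by simp
    ultimately show "pd None g q = 0" by simp
  qed
  have B: "\<forall>q\<in>W. pd (yc (n - 1 - k)) g q = 0" if "k \<le> n - 1" for k
    using that
  proof (induction k)
    case 0 then show ?case using A1 hz by simp
  next
    case (Suc k)
    have IH: "\<forall>q\<in>W. pd (yc (n - 1 - k)) g q = 0" using Suc by simp
    have m: "1 \<le> n - 1 - k" "n - 1 - k \<le> n" using Suc.prems by auto
    have eq: "n - 1 - k - 1 = n - 1 - Suc k" by simp
    show ?case using zeta_K[OF m sg IH E] hz eq by simp
  qed
  have ys: "\<forall>q\<in>W. pd (yc i) g q = 0" if "i \<le> n" for i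
  proof (cases "i = n")
    case True then show ?thesis using zn by simp
  next
    case False
    then have "n - 1 - (n - 1 - i) = i" "n - 1 - i \<le> n - 1" using that by auto
    then show ?thesis using B[of "n - 1 - i"] by simp
  qed
  have ne: "\<forall>q\<in>W. \<forall>l. l \<noteq> xc \<longrightarrow> pd l g q = 0"
  proof (intro ballI allI impI)
    fix q l assume q: "q \<in> W" and l: "l \<noteq> xc"
    show "pd l g q = 0"
    proof (cases l rule: coord_cases)
      case 1 then show ?thesis using hz q by simp
    next
      case 2 then show ?thesis using l by simp
    next
      case (3 i) then show ?thesis using ys q by simp
    qed
  qed
  have xz: "\<forall>q\<in>W. pd xc g q = 0"
  proof
    fix q assume q: "q \<in> W"
    have "vf_apply X1 g q = (\<Sum>l\<in>UNIV. if l = xc then pd xc g q else 0)"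
      unfolding vf_apply_def using ne q by (intro sum.cong refl) (simp add: X1_x)
    then show "pd xc g q = 0" using E q by simp
  qed
  show ?thesis
  proof (intro allI ballI)
    fix l q assume q: "q \<in> W"
    show "pd l g q = 0"
      using xz ne q by (cases "l = xc") auto
  qed
qed


lemma main_dir:
  assumes sY: "vf_smooth W Y" and sym: "inf_symmetry W G Y" and li: "lies_in W (derived W G 3) Y"
    and conn: "connected W"
  shows "\<exists>c. \<forall>q\<in>W. Y q = c *\<^sub>R axis None 1"
proof -
  have smY: "\<And>c. smooth_on W (\<lambda>q. Y q $ c)" using sY vf_smooth_def by blast
  define \<xi> where "\<xi> = (\<lambda>q. Y q $ xc)"
  define \<zeta> where "\<zeta> = (\<lambda>q. Y q $ None)"
  have s\<xi>: "smooth_on W \<xi>" using smY \<xi>_def by simp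
  have E0: "\<forall>q\<in>W. Y q $ yc 0 = \<xi> q * q $ yc 1"
  proof
    fix q assume q: "q \<in> W"
    obtain V where V: "Y q = V q" "V \<in> derived W G 3" using li q unfolding lies_in_def by blast
    have "Inv (n - 2) V" by (rule D3_Inv[OF V(2)])
    moreover have "0 < n - 2" using n3 by simp
    ultimately show "Y q $ yc 0 = \<xi> q * q $ yc 1" using q V(1) unfolding Inv_def \<xi>_def by simp
  qed
  have E1: "\<exists>\<gamma>. (\<forall>i<n. Y q $ yc (Suc i) - vf_apply X1 (\<lambda>p. Y p $ yc i) q = \<gamma> * q $ yc (Suc i))
             \<and> - vf_apply X1 \<xi> q = \<gamma>
             \<and> vf_apply Y (\<lambda>p. f (jproj p)) q - vf_apply X1 \<zeta> q = \<gamma> * f (jproj q)" if q: "q \<in> W" for q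
  proof -
    have "sec_in W G (lie_bracket Y X1)" using sym X1_in unfolding inf_symmetry_def by blast
    then obtain a b where ab: "lie_bracket Y X1 q = a *\<^sub>R X1 q + b *\<^sub>R X2 q" using sec_decomp q by blast
    have comp: "vf_apply Y (\<lambda>p. X1 p $ j) q - vf_apply X1 (\<lambda>p. Y p $ j) q = a * X1 q $ j + b * X2 q $ j" for j
      using arg_cong[OF ab, of "\<lambda>v. v $ j"] unfolding lie_bracket_def by simp
    have c1: "\<forall>i<n. Y q $ yc (Suc i) - vf_apply X1 (\<lambda>p. Y p $ yc i) q = a * q $ yc (Suc i)"
    proof (intro allI impI)
      fix i assume i: "i < n"
      have "yc i \<noteq> yc n" using yc_eq[of i n] i by simp
      then show "Y q $ yc (Suc i) - vf_apply X1 (\<lambda>p. Y p $ yc i) q = a * q $ yc (Suc i)"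
        using comp[of "yc i"] i by (simp add: X1_fun_y vf_apply_coord X1_y X2_comp)
    qed
    have c2: "- vf_apply X1 \<xi> q = a"
    proof -
      have "xc \<noteq> yc n" using yc_ne_x[of n] by simp
      then show ?thesis using comp[of xc] by (simp add: X1_fun_x vf_apply_const X1_x X2_comp \<xi>_def)
    qed
    have c3: "vf_apply Y (\<lambda>p. f (jproj p)) q - vf_apply X1 \<zeta> q = a * f (jproj q)"
      using comp[of None] by (simp add: X1_fun_z X1_z X2_comp \<zeta>_def)
    show ?thesis using c1 c2 c3 by blast
  qed
  have E2: "pd (yc n) (\<lambda>p. Y p $ yc (n-1)) q = pd (yc n) \<xi> q * q $ yc n
            \<and> pd (yc n) \<zeta> q = pd (yc n) \<xi> q * f (jproj q)" if q: "q \<in> W" for q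
  proof -
    have "sec_in W G (lie_bracket Y X2)" using sym X2_in unfolding inf_symmetry_def by blast
    then obtain a b where ab: "lie_bracket Y X2 q = a *\<^sub>R X1 q + b *\<^sub>R X2 q" using sec_decomp q by blast
    have comp: "- pd (yc n) (\<lambda>p. Y p $ j) q = a * X1 q $ j + b * X2 q $ j" for j
      using arg_cong[OF ab, of "\<lambda>v. v $ j"] by (simp add: bracket_Y_X2)
    have "xc \<noteq> yc n" using yc_ne_x[of n] by simp
    then have c1: "- pd (yc n) \<xi> q = a" using comp[of xc] by (simp add: X1_x X2_comp \<xi>_def)
    have "yc (n-1) \<noteq> yc n" using yc_eq[of "n-1" n] n3 by simp
    moreover have "Suc (n-1) = n" using n3 by simp
    ultimately have c2: "- pd (yc n) (\<lambda>p. Y p $ yc (n-1)) q = a * q $ yc n"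
      using comp[of "yc (n-1)"] X1_y[of "n-1" q] n3 by (simp add: X2_comp)
    have c3: "- pd (yc n) \<zeta> q = a * f (jproj q)" using comp[of None] by (simp add: X1_z X2_comp \<zeta>_def)
    have aa: "a = - pd (yc n) \<xi> q" using c1 by simp
    show ?thesis using c2 c3 unfolding aa by simp
  qed
  have S2: "\<forall>q\<in>W. Y q $ yc (Suc j) = \<xi> q * X1 q $ yc (Suc j)"
    if j: "j < n" and hj: "\<forall>q\<in>W. Y q $ yc j = \<xi> q * q $ yc (Suc j)" for j
  proof
    fix q assume q: "q \<in> W"
    have pl: "\<And>l. pd l (\<lambda>p. Y p $ yc j) q = pd l \<xi> q * q $ yc (Suc j) + \<xi> q * (if l = yc (Suc j) then 1 else 0)"
      by (rule pd_times_coord[OF W_open q hj s\<xi>])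
    have "vf_apply X1 (\<lambda>p. Y p $ yc j) q = vf_apply X1 \<xi> q * q $ yc (Suc j) + \<xi> q * X1 q $ yc (Suc j)"
      unfolding vf_apply_def pl by (rule sum_delta_lemma)
    moreover obtain \<gamma> where "\<forall>i<n. Y q $ yc (Suc i) - vf_apply X1 (\<lambda>p. Y p $ yc i) q = \<gamma> * q $ yc (Suc i)"
      "- vf_apply X1 \<xi> q = \<gamma>" using E1[OF q] by blast
    ultimately show "Y q $ yc (Suc j) = \<xi> q * X1 q $ yc (Suc j)" using j by auto
  qed
  have S3: "\<forall>q\<in>W. Y q $ yc j = \<xi> q * q $ yc (Suc j)" if "j < n" for j
    using that
  proof (induction j)
    case 0 then show ?case using E0 by simp
  next
    case (Suc j)
    have "\<forall>q\<in>W. Y q $ yc j = \<xi> q * q $ yc (Suc j)" using Suc by simp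
    then have "\<forall>q\<in>W. Y q $ yc (Suc j) = \<xi> q * X1 q $ yc (Suc j)" using S2 Suc.prems by simp
    then show ?case using Suc.prems by (simp add: X1_y)
  qed
  have n1: "Suc (n-1) = n" using n3 by simp
  have Yn: "\<forall>q\<in>W. Y q $ yc n = 0"
    using S2[of "n-1"] S3[of "n-1"] n3 n1 by (simp add: X1_yn)
  have xi0: "\<forall>q\<in>W. \<xi> q = 0"
  proof
    fix q assume q: "q \<in> W"
    have h: "\<forall>p\<in>W. Y p $ yc (n-1) = \<xi> p * p $ yc n" using S3[of "n-1"] n3 n1 by simp
    have "pd (yc n) (\<lambda>p. Y p $ yc (n-1)) q = pd (yc n) \<xi> q * q $ yc n + \<xi> q"
      using pd_times_coord[OF W_open q h s\<xi>, of "yc n"] by simp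
    then show "\<xi> q = 0" using E2[OF q] by simp
  qed
  have Y0: "\<forall>q\<in>W. \<forall>k. Y q $ Some k = 0"
  proof (intro ballI allI)
    fix q k assume q: "q \<in> W"
    show "Y q $ Some k = 0"
    proof (cases "Some k" rule: coord_cases)
      case 1 then show ?thesis by simp
    next
      case 2 then show ?thesis using xi0 q unfolding \<xi>_def by simp
    next
      case (3 i)
      show ?thesis
      proof (cases "i = n")
        case True then show ?thesis using 3 Yn q by simp
      next
        case False then show ?thesis using 3 S3[of i] xi0 q by simp
      qed
    qed
  qed
  have pxi: "\<forall>q\<in>W. pd l \<xi> q = 0" for l
  proof
    fix q assume q: "q \<in> W"
    have "pd l \<xi> q = pd l (\<lambda>p. 0) q" by (rule pd_local[OF W_open q]) (use xi0 in simp)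
    then show "pd l \<xi> q = 0" by (simp add: pd_const)
  qed
  have zn: "\<forall>q\<in>W. pd (yc n) \<zeta> q = 0" using E2 pxi by simp
  have zE: "\<forall>q\<in>W. vf_apply X1 \<zeta> q = 0"
  proof
    fix q assume q: "q \<in> W"
    have a1: "vf_apply X1 \<xi> q = 0" unfolding vf_apply_def using pxi q by simp
    have a2: "vf_apply Y (\<lambda>p. f (jproj p)) q = 0"
      unfolding vf_apply_def
    proof (rule sum.neutral, rule ballI)
      fix l :: "'j option"
      show "Y q $ l * pd l (\<lambda>p. f (jproj p)) q = 0"
        using Y0 q by (cases l) (simp_all add: pd_jproj_None)
    qed
    obtain \<gamma> where "- vf_apply X1 \<xi> q = \<gamma>" "vf_apply Y (\<lambda>p. f (jproj p)) q - vf_apply X1 \<zeta> q = \<gamma> * f (jproj q)"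
      using E1[OF q] by blast
    then show "vf_apply X1 \<zeta> q = 0" using a1 a2 by simp
  qed
  have allz: "\<forall>l. \<forall>q\<in>W. pd l \<zeta> q = 0"
    by (rule zeta_all[OF _ zn zE]) (use smY \<zeta>_def in simp)
  obtain c where c: "\<forall>q\<in>W. \<zeta> q = c"
    using pd_zero_const[OF W_open conn smooth_pdiff allz] smY \<zeta>_def by blast
  show ?thesis
  proof (intro exI ballI)
    fix q assume q: "q \<in> W"
    show "Y q = c *\<^sub>R axis None 1"
      unfolding vec_eq_iff
    proof
      fix j show "Y q $ j = (c *\<^sub>R axis None 1) $ j"
        using c Y0 q unfolding \<zeta>_def by (cases j) (simp_all add: axis_def)
    qed
  qed
qed

end



lemma W_connected:
  fixes U :: "(real^'j::finite) set"
  assumes "connected U"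
  shows "connected {q::real^('j option). jproj q \<in> U}"
proof -
  define \<phi> :: "(real^'j) \<times> real \<Rightarrow> real^('j option)" where
    "\<phi> = (\<lambda>(u,t). \<chi> c. case c of None \<Rightarrow> t | Some k \<Rightarrow> u $ k)"
  have img: "{q. jproj q \<in> U} = \<phi> ` (U \<times> UNIV)"
  proof
    show "{q. jproj q \<in> U} \<subseteq> \<phi> ` (U \<times> UNIV)"
    proof
      fix q assume q: "q \<in> {q. jproj q \<in> U}"
      have "q = \<phi> (jproj q, q $ None)"
        unfolding \<phi>_def vec_eq_iff by (auto simp: jproj_def split: option.splits)
      then show "q \<in> \<phi> ` (U \<times> UNIV)" using q by blast
    qed
    show "\<phi> ` (U \<times> UNIV) \<subseteq> {q. jproj q \<in> U}"
      by (auto simp: \<phi>_def jproj_def)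
  qed
  have cont: "continuous_on (U \<times> UNIV) \<phi>"
    unfolding \<phi>_def case_prod_unfold
  proof (rule continuous_on_vec_lambda)
    fix c :: "'j option"
    show "continuous_on (U \<times> UNIV) (\<lambda>x. case c of None \<Rightarrow> snd x | Some k \<Rightarrow> fst x $ k)"
      by (cases c) (auto intro!: continuous_intros)
  qed
  have "connected (U \<times> (UNIV::real set))" using assms by (intro connected_Times) auto
  then show ?thesis unfolding img by (rule connected_continuous_image[OF cont])
qed

theorem lemma2p1:
  fixes n :: nat and e :: "nat \<Rightarrow> 'j::finite" and f :: "real^'j \<Rightarrow> real"
    and U :: "(real^'j) set"
  assumes n3: "n \<ge> 3"
    and enum: "bij_betw e {..<n+2} (UNIV :: 'j set)"
    and U_open: "open U" and U_conn: "connected U"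
    and f_smooth: "smooth_on U f"
    and f_nondeg: "\<forall>p\<in>U. pd (e (n+1)) (pd (e (n+1)) f) p \<noteq> 0"
  shows "\<forall>Y. vf_smooth {q. jproj q \<in> U} Y \<longrightarrow>
           ((inf_symmetry {q. jproj q \<in> U} (sections2 {q. jproj q \<in> U} (X1_field n e f) (X2_field n e)) Y
             \<and> lies_in {q. jproj q \<in> U}
                 (derived {q. jproj q \<in> U} (sections2 {q. jproj q \<in> U} (X1_field n e f) (X2_field n e)) 3) Y)
            \<longleftrightarrow> (\<exists>c::real. \<forall>q\<in>{q. jproj q \<in> U}. Y q = c *\<^sub>R axis None 1))"
proof -
  interpret jet n e f U
    by unfold_locales (use assms in auto)
  have conn: "connected W" by (rule W_connected[OF U_conn])
  show ?thesis
  proof (intro allI impI iffI)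
    fix Y assume sY: "vf_smooth W Y"
    {
      assume "inf_symmetry W G Y \<and> lies_in W (derived W G 3) Y"
      then show "\<exists>c. \<forall>q\<in>W. Y q = c *\<^sub>R axis None 1"
        using main_dir[OF sY _ _ conn] by blast
    }
    {
      assume "\<exists>c. \<forall>q\<in>W. Y q = c *\<^sub>R axis None 1"
      then obtain c where c: "\<forall>q\<in>W. Y q = c *\<^sub>R axis None 1" by blast
      have "inf_symmetry W G Y" by (rule sym_z[OF sY c])
      moreover have "lies_in W (derived W G 3) Y"
        using lies_in_z[of c] c unfolding lies_in_def by simp
      ultimately show "inf_symmetry W G Y \<and> lies_in W (derived W G 3) Y" by blast
    }
  qed
qed


end
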